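(* For $i = 0,\dots,2^n-1$, the row $i$ word $m_i(n)$ in the matrix $M_n$ (the $i$-th Gray code word of length $n$) is equal to $\lambda_0([i]_2^R)^R$, where $R$ denotes word reversal and $[i]_2$ is the length $n$ binary representation of $i$ with the least significant digit first (including leading zeros, if necessary).
   Context: Let $X_2=\{0,1\}$. Define matrices $M_n$ of size $2^n \times n$ with entries in $X_2$ recursively by \[ M_1 = \begin{bmatrix} 0 \\ 1 \end{bmatrix}, \qquad M_{n+1} = \begin{bmatrix} M_n & 0_n \\ M_n^R & 1_n \end{bmatrix}, \] where $M_n^R$ is obtained from $M_n$ by reversing the order of its rows, and $0_n$, $1_n$ are column vectors with $2^n$ entries all equal to $0$, $1$ respectively; rows are indexed from $0$. The binary tree automorphisms $\lambda_0,\lambda_1$ (the states of the transducer generating the lamplighter group) are defined recursively by $\lambda_0(0w)=0\,\lambda_0(w)$, $\lambda_0(1w)=1\,\lambda_1(w)$, $\lambda_1(0w)=1\,\lambda_0(w)$, $\lambda_1(1w)=0\,\lambda_1(w)$, and $\lambda_0(\emptyset)=\lambda_1(\emptyset)=\emptyset$. *)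

theory Defs
  imports Main
begin

text \<open>Letters of X_2 = {0,1} are represented by the naturals 0 and 1; words are lists,
  written left to right (first letter = head of the list).\<close>

text \<open>The matrix M_n, as the list of its 2^n rows (row i = nth (M n) i), each row a word of length n.
  M 0 is not used (the paper starts at n = 1).\<close>
fun M :: "nat \<Rightarrow> nat list list" where
  "M 0 = []"
| "M (Suc 0) = [[0], [1]]"
| "M (Suc (Suc n)) =
     map (\<lambda>r. r @ [0]) (M (Suc n)) @ map (\<lambda>r. r @ [1]) (rev (M (Suc n)))"

fun lam0 :: "nat list \<Rightarrow> nat list" and lam1 :: "nat list \<Rightarrow> nat list" where
  "lam0 [] = []"
| "lam0 (0 # w) = 0 # lam0 w"
| "lam0 (Suc 0 # w) = 1 # lam1 w"
| "lam1 [] = []"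
| "lam1 (0 # w) = 1 # lam0 w"
| "lam1 (Suc 0 # w) = 0 # lam1 w"

definition bin_lsb :: "nat \<Rightarrow> nat \<Rightarrow> nat list" where
  "bin_lsb n i = map (\<lambda>k. i div 2 ^ k mod 2) [0..<n]"

end

theory Submission
  imports Defs
begin

definition cpl :: "nat list \<Rightarrow> nat list" where
  "cpl w = map (\<lambda>b. 1 - b) w"

lemma lam_cpl:
  "set w \<subseteq> {0,1} \<Longrightarrow> lam1 w = lam0 (cpl w) \<and> lam0 w = lam1 (cpl w)"
proof (induction w)
  case Nil then show ?case by (simp add: cpl_def)
next
  case (Cons a w)
  then have a: "a = 0 \<or> a = Suc 0" and IH: "lam1 w = lam0 (cpl w) \<and> lam0 w = lam1 (cpl w)" by auto
  from a show ?case
  proof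
    assume "a = 0" then show ?thesis using IH by (simp add: cpl_def)
  next
    assume "a = Suc 0" then show ?thesis using IH by (simp add: cpl_def)
  qed
qed

lemma bin_Suc: "bin_lsb (Suc n) i = i mod 2 # bin_lsb n (i div 2)"
  unfolding bin_lsb_def
  by (simp add: map_upt_Suc div_mult2_eq power_Suc del: upt_Suc)

lemma bin_Suc2: "bin_lsb (Suc n) i = bin_lsb n i @ [i div 2 ^ n mod 2]"
  unfolding bin_lsb_def by simp

lemma bin_set: "set (bin_lsb n i) \<subseteq> {0,1}"
  unfolding bin_lsb_def by auto

lemma bin_mod: "bin_lsb n (i mod 2 ^ n) = bin_lsb n i"
proof (induction n arbitrary: i)
  case 0 then show ?case by (simp add: bin_lsb_def)
next
  case (Suc n)
  have "i mod 2 ^ Suc n = 2 * (i div 2 mod 2 ^ n) + i mod 2"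
    by (metis mod_mult2_eq power_Suc mult.commute)
  then have "(i mod 2 ^ Suc n) mod 2 = i mod 2" "(i mod 2 ^ Suc n) div 2 = i div 2 mod 2 ^ n"
    by simp_all
  then show ?case by (simp add: bin_Suc Suc.IH)
qed

lemma bin_cpl: "i < 2 ^ n \<Longrightarrow> bin_lsb n (2 ^ n - 1 - i) = cpl (bin_lsb n i)"
proof (induction n arbitrary: i)
  case 0 then show ?case by (simp add: bin_lsb_def cpl_def)
next
  case (Suc n)
  define N where "N = (2::nat) ^ n"
  have N: "N > 0" unfolding N_def by simp
  have i: "i < 2 * N" using Suc.prems by (simp add: N_def)
  obtain q r where qr: "i = 2 * q + r" "r < 2" by (metis div_mult_mod_eq mod_less_divisor zero_less_numeral mult.commute)
  have q: "q < N" using i qr by linarith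
  have e: "2 ^ Suc n - 1 - i = 2 * (N - 1 - q) + (1 - r)" using qr q N by (simp add: N_def)
  have "(2 ^ Suc n - 1 - i) mod 2 = 1 - r" "(2 ^ Suc n - 1 - i) div 2 = N - 1 - q"
    using e qr by (cases "r = 0"; simp add: e; presburger)+
  moreover have "i mod 2 = r" "i div 2 = q" using qr by simp_all
  ultimately show ?case using Suc.IH[of q] q by (simp add: bin_Suc cpl_def N_def)
qed

definition G :: "nat \<Rightarrow> nat \<Rightarrow> nat list" where
  "G n i = rev (lam0 (rev (bin_lsb n i)))"

lemma G_lo: "i < 2 ^ n \<Longrightarrow> G (Suc n) i = G n i @ [0]"
  unfolding G_def by (simp add: bin_Suc2)

lemma G_hi:
  assumes "2 ^ n \<le> i" "i < 2 ^ Suc n"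
  shows "G (Suc n) i = G n (2 ^ n - 1 - (i - 2 ^ n)) @ [1]"
proof -
  have t: "i div 2 ^ n mod 2 = 1" using assms
  proof -
    have "i div 2 ^ n = 1"
    proof (rule div_nat_eqI)
      show "2 ^ n * 1 \<le> i" using assms by simp
      show "i < 2 ^ n * Suc 1" using assms by simp
    qed
    then show ?thesis by simp
  qed
  have m: "i mod 2 ^ n = i - 2 ^ n" using assms by (simp add: le_mod_geq)
  have b: "bin_lsb n i = bin_lsb n (i - 2 ^ n)" using bin_mod[of n i] m by simp
  have l: "i - 2 ^ n < 2 ^ n" using assms by simp
  have "lam1 (rev (bin_lsb n i)) = lam0 (cpl (rev (bin_lsb n i)))"
    using lam_cpl[of "rev (bin_lsb n i)"] bin_set[of n i] by simp
  also have "cpl (rev (bin_lsb n i)) = rev (bin_lsb n (2 ^ n - 1 - (i - 2 ^ n)))"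
    using bin_cpl[OF l] b by (simp add: cpl_def rev_map)
  finally show ?thesis unfolding G_def by (simp add: bin_Suc2 t)
qed

lemma main: "i < 2 ^ Suc n \<Longrightarrow> M (Suc n) ! i = G (Suc n) i"
proof (induction n arbitrary: i)
  case 0
  then have "i = 0 \<or> i = 1" by auto
  then show ?case by (auto simp: G_def bin_lsb_def)
next
  case (Suc n)
  have len: "length (M (Suc n)) = 2 ^ Suc n"
  proof (induction n)
    case 0 then show ?case by simp
  next
    case (Suc n) then show ?case by simp
  qed
  show ?case
  proof (cases "i < 2 ^ Suc n")
    case True
    then show ?thesis using Suc.IH[OF True] len by (simp add: nth_append G_lo)
  next
    case False
    let ?j = "2 ^ Suc n - 1 - (i - 2 ^ Suc n)"
    have j: "?j < 2 ^ Suc n" by simp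
    have "M (Suc (Suc n)) ! i = rev (M (Suc n)) ! (i - 2 ^ Suc n) @ [1]"
      using False Suc.prems len by (simp add: nth_append)
    also have "rev (M (Suc n)) ! (i - 2 ^ Suc n) = M (Suc n) ! ?j"
      using False Suc.prems len by (simp add: rev_nth)
    finally show ?thesis using Suc.IH[OF j] G_hi[of "Suc n" i] False Suc.prems by simp
  qed
qed

theorem mainTheorem11:
  fixes n i :: nat
  assumes "n \<ge> 1" and "i < 2 ^ n"
  shows "M n ! i = rev (lam0 (rev (bin_lsb n i)))"
  using main[of i "n - 1"] assms by (simp add: G_def)

end
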